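(* Let $\hat Q^\pi\in\mathcal H$ be the kernel TD estimator, i.e. a function satisfying $$\hat Q^\pi\in\arg\min_{f\in\mathcal H}\ \frac1n\sum_{i=1}^n\Big(f(\omega_0^{(i)})-r(\omega_0^{(i)})-\gamma\hat Q^\pi(\omega_1^{(i)})\Big)^2+\lambda\|f\|_{\mathcal H}^2 .$$ Then $\hat Q^\pi$ has the closed form $$\hat Q^\pi=K(\cdot,\boldsymbol\omega_0)\,\mathbf b^\pi=\sum_{i=1}^n b^\pi_i K(\cdot,\omega_0^{(i)}),\qquad \mathbf b^\pi=\big[\mathbf K+\lambda n\mathrm I-\gamma\mathbf C\big]^{-1}\mathbf r,$$ where $\mathbf K_{i,j}=K(\omega_0^{(i)},\omega_0^{(j)})$, $\mathbf C_{i,j}=K(\omega_1^{(i)},\omega_0^{(j)})$ and $\mathbf r=[r(\omega_0^{(1)}),\dots,r(\omega_0^{(n)})]^\top$.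
   Context: Markov decision process $(\mathcal S,\mathcal A,P,r,\gamma)$ with compact convex $\mathcal S\subset\mathbb R^{d_s}$, $\mathcal A\subset\mathbb R^{d_a}$, transition density $P(\cdot\mid s,a)$, reward $r:\mathcal S\times\mathcal A\to\mathbb R$, discount $\gamma\in[0,1]$; $\pi$ is a fixed policy. Write $\omega=(s,a)$. $K$ is a symmetric positive definite kernel on $\mathcal S\times\mathcal A$ with $\max_\omega K(\omega,\omega)<\infty$, $\mathcal H$ its RKHS, and $\lambda>0$. Data: for $i=1,\dots,n$, independently $s_0^{(i)}\sim\mu_0$, $a_0^{(i)}\sim\pi(\cdot\mid s_0^{(i)})$, $s_1^{(i)}\sim P(\cdot\mid s_0^{(i)},a_0^{(i)})$, $a_1^{(i)}\sim\pi(\cdot\mid s_1^{(i)})$, where $\mu_0$ is a chosen initial state distribution; $\omega_j^{(i)}=(s_j^{(i)},a_j^{(i)})$ for $j=0,1$, and $\boldsymbol\omega_0=(\omega_0^{(1)},\dots,\omega_0^{(n)})$. *)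

theory Defs
  imports "HOL-Analysis.Analysis"
begin

definition pd_kernel :: "'x set \<Rightarrow> ('x \<Rightarrow> 'x \<Rightarrow> real) \<Rightarrow> bool" where
  "pd_kernel \<Omega> K \<longleftrightarrow>
     (\<forall>x\<in>\<Omega>. \<forall>y\<in>\<Omega>. K x y = K y x) \<and>
     (\<forall>(m::nat) (p::nat \<Rightarrow> 'x) (c::nat \<Rightarrow> real). (\<forall>i<m. p i \<in> \<Omega>) \<longrightarrow>
        (\<Sum>i<m. \<Sum>j<m. c i * c j * K (p i) (p j)) \<ge> 0)"

text \<open>A Hilbert space H (a type 'h) together with an evaluation map ev is the
  reproducing kernel Hilbert space of K on Omega, with kernel sections ksec:
  the elements of H are functions on Omega (ev is injective on Omega),
  ksec x is the function K(.,x), and the reproducing property holds.\<close>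
definition is_RKHS ::
  "'x set \<Rightarrow> ('x \<Rightarrow> 'x \<Rightarrow> real) \<Rightarrow> ('h::{real_inner,complete_space} \<Rightarrow> 'x \<Rightarrow> real)
     \<Rightarrow> ('x \<Rightarrow> 'h) \<Rightarrow> bool" where
  "is_RKHS \<Omega> K ev ksec \<longleftrightarrow>
     (\<forall>f g. (\<forall>x\<in>\<Omega>. ev f x = ev g x) \<longrightarrow> f = g) \<and>
     (\<forall>x\<in>\<Omega>. \<forall>y\<in>\<Omega>. ev (ksec x) y = K y x) \<and>
     (\<forall>f. \<forall>x\<in>\<Omega>. ev f x = inner f (ksec x))"

text \<open>Kernel TD objective, sample size n = CARD('n), data w0 i = omega_0^(i), w1 i = omega_1^(i).\<close>
definition td_objective ::
  "('h::real_inner \<Rightarrow> 'x \<Rightarrow> real) \<Rightarrow> ('x \<Rightarrow> real) \<Rightarrow> real \<Rightarrow> real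
     \<Rightarrow> ('n::finite \<Rightarrow> 'x) \<Rightarrow> ('n \<Rightarrow> 'x) \<Rightarrow> 'h \<Rightarrow> 'h \<Rightarrow> real" where
  "td_objective ev r \<gamma> lam w0 w1 Q f =
     (1 / real CARD('n)) * (\<Sum>i\<in>UNIV. (ev f (w0 i) - r (w0 i) - \<gamma> * ev Q (w1 i))^2)
     + lam * (norm f)^2"

definition td_matrix ::
  "('x \<Rightarrow> 'x \<Rightarrow> real) \<Rightarrow> real \<Rightarrow> real \<Rightarrow> ('n::finite \<Rightarrow> 'x) \<Rightarrow> ('n \<Rightarrow> 'x) \<Rightarrow> real^'n^'n" where
  "td_matrix K \<gamma> lam w0 w1 =
     (\<chi> i j. K (w0 i) (w0 j) + (if i = j then lam * real CARD('n) else 0) - \<gamma> * K (w1 i) (w0 j))"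

end

theory Submission
  imports Defs
begin

lemma quad_nonneg_lin0:
  fixes a b :: real
  assumes "\<And>t. 0 \<le> a * t^2 + b * t"
  shows "b = 0"
proof -
  define e where "e = 1 / (\<bar>a\<bar> + 1)"
  have e0: "e > 0" unfolding e_def by (simp add: add_pos_nonneg)
  have ae: "a * e < 1" unfolding e_def
    by (simp add: divide_simps) (smt (verit))
  have "0 \<le> a * (- b * e)^2 + b * (- b * e)" using assms by blast
  also have "\<dots> = b^2 * e * (a * e - 1)" by (simp add: power2_eq_square algebra_simps)
  finally have "0 \<le> b^2 * e * (a * e - 1)" .
  moreover have "b^2 * e * (a * e - 1) \<le> 0"
    using e0 ae by (simp add: mult_nonneg_nonpos)
  ultimately have "b^2 * e * (a*e - 1) = 0" by linarith
  then show ?thesis using e0 ae by simp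
qed

lemma matrix_inv_left':
  fixes M :: "real^'n^'n"
  assumes "invertible M"
  shows "matrix_inv M ** M = mat 1"
  using someI_ex[OF assms[unfolded invertible_def]] unfolding matrix_inv_def by blast

theorem proposition1:
  fixes S :: "'s::euclidean_space set" and A :: "'a::euclidean_space set"
    and K :: "'s \<times> 'a \<Rightarrow> 's \<times> 'a \<Rightarrow> real"
    and ev :: "'h::{real_inner,complete_space} \<Rightarrow> 's \<times> 'a \<Rightarrow> real"
    and ksec :: "'s \<times> 'a \<Rightarrow> 'h"
    and r :: "'s \<times> 'a \<Rightarrow> real" and \<gamma> lam :: real
    and w0 w1 :: "'n::finite \<Rightarrow> 's \<times> 'a"
    and Qhat :: 'h
  assumes "compact S" "convex S" "compact A" "convex A"
    and "pd_kernel (S \<times> A) K"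
    and "bdd_above ((\<lambda>w. K w w) ` (S \<times> A))"
    and "is_RKHS (S \<times> A) K ev ksec"
    and "0 \<le> \<gamma>" "\<gamma> \<le> 1" "0 < lam"
    and "\<And>i. w0 i \<in> S \<times> A" "\<And>i. w1 i \<in> S \<times> A"
    and "invertible (td_matrix K \<gamma> lam w0 w1)"
    and "\<And>f. td_objective ev r \<gamma> lam w0 w1 Qhat Qhat \<le> td_objective ev r \<gamma> lam w0 w1 Qhat f"
  shows "Qhat = (let b = matrix_inv (td_matrix K \<gamma> lam w0 w1) *v (\<chi> i. r (w0 i))
                 in \<Sum>i\<in>UNIV. b $ i *\<^sub>R ksec (w0 i))"
proof -
  note R = assms(7)[unfolded is_RKHS_def]
  have evi: "\<And>f x. x \<in> S \<times> A \<Longrightarrow> ev f x = inner f (ksec x)" using R by blast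
  have evk: "\<And>x y. x \<in> S \<times> A \<Longrightarrow> y \<in> S \<times> A \<Longrightarrow> ev (ksec x) y = K y x" using R by blast
  define Q where "Q = Qhat"
  define n where "n = real CARD('n)"
  have n0: "n > 0" unfolding n_def by simp
  define k where "k i = ksec (w0 i)" for i
  define e where "e i = ev Q (w0 i) - r (w0 i) - \<gamma> * ev Q (w1 i)" for i
  define v where "v = lam *\<^sub>R Q + (1/n) *\<^sub>R (\<Sum>i\<in>UNIV. e i *\<^sub>R k i)"
  let ?J = "td_objective ev r \<gamma> lam w0 w1 Q"
  have Jexp: "?J (Q + t *\<^sub>R v) - ?J Q
     = ((1/n) * (\<Sum>i\<in>UNIV. (inner v (k i))^2) + lam * (norm v)^2) * t^2
       + (2 * inner v v) * t" for t
  proof -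
    have ev1: "ev (Q + t *\<^sub>R v) (w0 i) = inner Q (k i) + t * inner v (k i)" for i
      using evi[OF assms(11)] by (simp add: k_def inner_add_left)
    have ev0: "ev Q (w0 i) = inner Q (k i)" for i
      using evi[OF assms(11)] by (simp add: k_def)
    have sq: "(ev (Q + t *\<^sub>R v) (w0 i) - r (w0 i) - \<gamma> * ev Q (w1 i))^2
        = (e i)^2 + 2 * t * (e i * inner v (k i)) + t^2 * (inner v (k i))^2" for i
      unfolding ev1 e_def ev0 by (simp add: power2_eq_square algebra_simps)
    have nrm: "(norm (Q + t *\<^sub>R v))^2 = (norm Q)^2 + 2 * t * inner Q v + t^2 * (norm v)^2"
      unfolding power2_norm_eq_inner
      by (simp add: inner_add_left inner_add_right inner_commute[of v Q] power2_eq_square algebra_simps)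
    have vv: "inner v v = lam * inner Q v + (1/n) * (\<Sum>i\<in>UNIV. e i * inner v (k i))"
    proof -
      have "inner (lam *\<^sub>R Q + (1/n) *\<^sub>R (\<Sum>i\<in>UNIV. e i *\<^sub>R k i)) u
         = lam * inner Q u + (1/n) * (\<Sum>i\<in>UNIV. e i * inner (k i) u)" for u
        by (simp add: inner_add_left inner_sum_left)
      then show ?thesis unfolding v_def[symmetric] by (simp add: inner_commute)
    qed
    have s1: "(\<Sum>i\<in>UNIV. (ev (Q + t *\<^sub>R v) (w0 i) - r (w0 i) - \<gamma> * ev Q (w1 i))^2)
       = (\<Sum>i\<in>UNIV. (e i)^2) + 2 * t * (\<Sum>i\<in>UNIV. e i * inner v (k i))
         + t^2 * (\<Sum>i\<in>UNIV. (inner v (k i))^2)"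
      unfolding sq by (simp add: sum.distrib sum_distrib_left)
    have s0: "(\<Sum>i\<in>UNIV. (ev Q (w0 i) - r (w0 i) - \<gamma> * ev Q (w1 i))^2)
       = (\<Sum>i\<in>UNIV. (e i)^2)" by (simp add: e_def)
    have "?J (Q + t *\<^sub>R v) - ?J Q
       = (1/n) * ((\<Sum>i\<in>UNIV. (e i)^2) + 2 * t * (\<Sum>i\<in>UNIV. e i * inner v (k i))
         + t^2 * (\<Sum>i\<in>UNIV. (inner v (k i))^2))
         + lam * ((norm Q)^2 + 2 * t * inner Q v + t^2 * (norm v)^2)
         - ((1/n) * (\<Sum>i\<in>UNIV. (e i)^2) + lam * (norm Q)^2)"
      unfolding td_objective_def s1 s0 nrm n_def by simp
    also have "\<dots> = ((1/n) * (\<Sum>i\<in>UNIV. (inner v (k i))^2) + lam * (norm v)^2) * t^2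
       + (2 * (lam * inner Q v + (1/n) * (\<Sum>i\<in>UNIV. e i * inner v (k i)))) * t"
      by (simp only: algebra_simps)
    finally show ?thesis unfolding vv .
  qed
  have "\<And>t. 0 \<le> ((1/n) * (\<Sum>i\<in>UNIV. (inner v (k i))^2) + lam * (norm v)^2) * t^2
       + (2 * inner v v) * t"
    using assms(14)[of "Q + _ *\<^sub>R v"] Jexp unfolding Q_def by (metis diff_ge_0_iff_ge)
  from quad_nonneg_lin0[OF this] have "v = 0" by simp
  define c where "c i = - e i / (n * lam)" for i
  have Qc: "Q = (\<Sum>i\<in>UNIV. c i *\<^sub>R k i)"
  proof -
    have "lam *\<^sub>R Q = - (1/n) *\<^sub>R (\<Sum>i\<in>UNIV. e i *\<^sub>R k i)"
      using \<open>v = 0\<close> unfolding v_def by (simp add: eq_neg_iff_add_eq_0)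
    then have "Q = (1/lam) *\<^sub>R (- (1/n) *\<^sub>R (\<Sum>i\<in>UNIV. e i *\<^sub>R k i))"
    proof -
      from \<open>lam *\<^sub>R Q = _\<close> have "(1/lam) *\<^sub>R (lam *\<^sub>R Q) = (1/lam) *\<^sub>R (- (1/n) *\<^sub>R (\<Sum>i\<in>UNIV. e i *\<^sub>R k i))"
        by simp
      then show ?thesis using assms(10) by simp
    qed
    also have "\<dots> = (\<Sum>i\<in>UNIV. c i *\<^sub>R k i)"
      by (simp add: scaleR_sum_right c_def mult.commute)
    finally show ?thesis .
  qed
  have evQ: "ev Q x = (\<Sum>i\<in>UNIV. c i * K x (w0 i))" if "x \<in> S \<times> A" for x
  proof -
    have "ev Q x = inner Q (ksec x)" using evi[OF that] .
    also have "\<dots> = (\<Sum>i\<in>UNIV. c i * inner (k i) (ksec x))"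
      by (simp add: Qc inner_sum_left)
    also have "\<dots> = (\<Sum>i\<in>UNIV. c i * K x (w0 i))"
      using evi[OF that] evk[OF assms(11) that] by (simp add: k_def)
    finally show ?thesis .
  qed
  define M where "M = td_matrix K \<gamma> lam w0 w1"
  define cv where "cv = (\<chi> i. c i)"
  have Mc: "M *v cv = (\<chi> i. r (w0 i))"
  proof (rule vec_eq_iff[THEN iffD2, rule_format])
    fix j
    have ej: "e j = - (n * lam) * c j" using n0 assms(10) by (simp add: c_def)
    have "(M *v cv) $ j = (\<Sum>i\<in>UNIV. (K (w0 j) (w0 i) + (if j = i then lam * n else 0)
              - \<gamma> * K (w1 j) (w0 i)) * c i)"
      unfolding n_def by (simp add: M_def td_matrix_def matrix_vector_mult_def cv_def)
    also have "\<dots> = (\<Sum>i\<in>UNIV. c i * K (w0 j) (w0 i)) + lam * n * c j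
              - \<gamma> * (\<Sum>i\<in>UNIV. c i * K (w1 j) (w0 i))"
    proof -
      have "(\<Sum>i\<in>UNIV. (K (w0 j) (w0 i) + (if j = i then lam * n else 0)
              - \<gamma> * K (w1 j) (w0 i)) * c i)
         = (\<Sum>i\<in>UNIV. c i * K (w0 j) (w0 i) + (if j = i then lam * n * c i else 0)
              - \<gamma> * (c i * K (w1 j) (w0 i)))"
        by (rule sum.cong) (auto simp: algebra_simps)
      also have "\<dots> = (\<Sum>i\<in>UNIV. c i * K (w0 j) (w0 i)) + (\<Sum>i\<in>UNIV. (if j = i then lam * n * c i else 0))
              - (\<Sum>i\<in>UNIV. \<gamma> * (c i * K (w1 j) (w0 i)))"
        by (simp only: sum.distrib sum_subtractf)
      also have "\<dots> = (\<Sum>i\<in>UNIV. c i * K (w0 j) (w0 i)) + lam * n * c j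
              - \<gamma> * (\<Sum>i\<in>UNIV. c i * K (w1 j) (w0 i))"
        by (simp add: sum_distrib_left)
      finally show ?thesis .
    qed
    also have "\<dots> = r (w0 j)"
      using ej unfolding e_def evQ[OF assms(11)] evQ[OF assms(12)] by (simp add: algebra_simps)
    finally show "(M *v cv) $ j = (\<chi> i. r (w0 i)) $ j" by simp
  qed
  have "matrix_inv M *v (\<chi> i. r (w0 i)) = cv"
    unfolding Mc[symmetric] matrix_vector_mul_assoc
    using matrix_inv_left'[OF assms(13)[folded M_def]] by simp
  then show ?thesis
    unfolding M_def[symmetric] Let_def using Qc by (simp add: cv_def k_def Q_def)
qed

end
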